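(* In the setting described in the context, let $(W^1,W^2)$ be a minimal pair of allocation states and suppose $y\in\mathcal X$ satisfies $W^1_y<\beta_y$. Then $W^1_{xy}=W^2_{xy}$ for all $x\in\mathcal X$.
   Context: $\mathcal X$ is a finite set of units, $\mathcal G=(\mathcal X,\mathcal E)$ a directed graph, $N_x=\{y:(x,y)\in\mathcal E\}$, $\alpha_x,\beta_x$ non-negative integers. An allocation state is a matrix $W\in\mathbb N^{\mathcal X\times\mathcal X}$ with $W_{xy}=0$ whenever $(x,y)\notin\mathcal E$, $W^x:=\sum_yW_{xy}=\alpha_x$ for all $x$, and $W_y:=\sum_xW_{xy}\le\beta_y$ for all $y$; $\mathcal W$ is the set of allocation states and $e_{xy}$ the matrix unit. Let $\mathcal L$ be the graph on $\mathcal W$ in which $W$ and $W'$ are adjacent iff $W'=W-e_{xy}+e_{xy'}$ for some $x$ and some $y\ne y'$ with $W_{xy}>0$, $y'\in N_x$, $W_{y'}<\beta_{y'}$ (these are exactly the positive-rate transitions of the paper's noisy best-response storage dynamics restricted to $\mathcal W$, under its standing assumption that unit activation rates are $\nu_x=\nu\alpha_x$ with $\nu>0$). Write $W\sim W'$ if $W,W'$ are connected by a path in $\mathcal L$. Let $\delta(W^1,W^2)=\sum_{x,y}|W^1_{xy}-W^2_{xy}|$. A pair $(W^1,W^2)$ in $\mathcal W$ is minimal if $\delta(W^1,W^2)\le\delta(W^{1'},W^{2'})$ for all $W^{1'}\sim W^1$ and all $W^{2'}\sim W^2$. *)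

theory Defs
  imports Main
begin

text \<open>Units form a finite type 'a (the finite set X). Matrices W : 'a => 'a => nat.
  E is the edge set of the directed graph, alpha/beta the integer parameters.\<close>

definition col_sum :: "('a::finite \<Rightarrow> 'a \<Rightarrow> nat) \<Rightarrow> 'a \<Rightarrow> nat" where
  "col_sum W y = (\<Sum>x\<in>UNIV. W x y)"

definition row_sum :: "('a::finite \<Rightarrow> 'a \<Rightarrow> nat) \<Rightarrow> 'a \<Rightarrow> nat" where
  "row_sum W x = (\<Sum>y\<in>UNIV. W x y)"

definition alloc_state ::
  "('a::finite \<times> 'a) set \<Rightarrow> ('a \<Rightarrow> nat) \<Rightarrow> ('a \<Rightarrow> nat) \<Rightarrow> ('a \<Rightarrow> 'a \<Rightarrow> nat) \<Rightarrow> bool" where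
  "alloc_state E \<alpha> \<beta> W \<longleftrightarrow>
     (\<forall>x y. (x, y) \<notin> E \<longrightarrow> W x y = 0) \<and>
     (\<forall>x. row_sum W x = \<alpha> x) \<and>
     (\<forall>y. col_sum W y \<le> \<beta> y)"

definition move :: "('a::finite \<times> 'a) set \<Rightarrow> ('a \<Rightarrow> nat)
    \<Rightarrow> ('a \<Rightarrow> 'a \<Rightarrow> nat) \<Rightarrow> ('a \<Rightarrow> 'a \<Rightarrow> nat) \<Rightarrow> bool" where
  "move E \<beta> W W' \<longleftrightarrow>
     (\<exists>x y y'. y \<noteq> y' \<and> W x y > 0 \<and> (x, y') \<in> E \<and> col_sum W y' < \<beta> y' \<and>
        W' = (\<lambda>a b. if a = x \<and> b = y then W a b - 1
                     else if a = x \<and> b = y' then W a b + 1 else W a b))"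

definition L_adj :: "('a::finite \<times> 'a) set \<Rightarrow> ('a \<Rightarrow> nat) \<Rightarrow> ('a \<Rightarrow> nat)
    \<Rightarrow> ('a \<Rightarrow> 'a \<Rightarrow> nat) \<Rightarrow> ('a \<Rightarrow> 'a \<Rightarrow> nat) \<Rightarrow> bool" where
  "L_adj E \<alpha> \<beta> W W' \<longleftrightarrow> alloc_state E \<alpha> \<beta> W \<and> alloc_state E \<alpha> \<beta> W' \<and>
     (move E \<beta> W W' \<or> move E \<beta> W' W)"

definition L_conn :: "('a::finite \<times> 'a) set \<Rightarrow> ('a \<Rightarrow> nat) \<Rightarrow> ('a \<Rightarrow> nat)
    \<Rightarrow> ('a \<Rightarrow> 'a \<Rightarrow> nat) \<Rightarrow> ('a \<Rightarrow> 'a \<Rightarrow> nat) \<Rightarrow> bool" where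
  "L_conn E \<alpha> \<beta> = (L_adj E \<alpha> \<beta>)\<^sup>*\<^sup>*"

definition dist_alloc :: "('a::finite \<Rightarrow> 'a \<Rightarrow> nat) \<Rightarrow> ('a \<Rightarrow> 'a \<Rightarrow> nat) \<Rightarrow> int" where
  "dist_alloc W1 W2 = (\<Sum>x\<in>UNIV. \<Sum>y\<in>UNIV. \<bar>int (W1 x y) - int (W2 x y)\<bar>)"

definition minimal_pair :: "('a::finite \<times> 'a) set \<Rightarrow> ('a \<Rightarrow> nat) \<Rightarrow> ('a \<Rightarrow> nat)
    \<Rightarrow> ('a \<Rightarrow> 'a \<Rightarrow> nat) \<Rightarrow> ('a \<Rightarrow> 'a \<Rightarrow> nat) \<Rightarrow> bool" where
  "minimal_pair E \<alpha> \<beta> W1 W2 \<longleftrightarrow>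
     alloc_state E \<alpha> \<beta> W1 \<and> alloc_state E \<alpha> \<beta> W2 \<and>
     (\<forall>W1' W2'. L_conn E \<alpha> \<beta> W1 W1' \<longrightarrow> L_conn E \<alpha> \<beta> W2 W2' \<longrightarrow>
        dist_alloc W1 W2 \<le> dist_alloc W1' W2')"

end

theory Submission
  imports Defs
begin

lemma dist_sym: "dist_alloc A B = dist_alloc B A"
  unfolding dist_alloc_def by (simp add: abs_minus_commute)

lemma key:
  fixes A B :: "'a::finite \<Rightarrow> 'a \<Rightarrow> nat"
  assumes aA: "alloc_state E \<alpha> \<beta> A" and aB: "alloc_state E \<alpha> \<beta> B"
    and cs: "col_sum A y < \<beta> y" and lt: "A x y < B x y"
  shows "\<exists>A'. L_adj E \<alpha> \<beta> A A' \<and> dist_alloc A' B < dist_alloc A B"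
proof -
  have "\<exists>y'. B x y' < A x y'"
  proof (rule ccontr)
    assume "\<not> ?thesis" then have "\<forall>y'. A x y' \<le> B x y'" by (auto simp: not_less)
    hence "row_sum A x < row_sum B x" unfolding row_sum_def using lt
      by (intro sum_strict_mono_ex1) auto
    with aA aB show False by (simp add: alloc_state_def)
  qed
  then obtain y' where y': "B x y' < A x y'" by blast
  have ne: "y' \<noteq> y" using lt y' by auto
  have Exy: "(x,y) \<in> E" using aB lt unfolding alloc_state_def by (metis less_nat_zero_code)
  define A' where "A' = (\<lambda>a b. if a = x \<and> b = y' then A a b - 1
                     else if a = x \<and> b = y then A a b + 1 else A a b)"
  have mv: "move E \<beta> A A'" unfolding move_def
    using ne y' Exy cs A'_def by (intro exI[of _ x] exI[of _ y'] exI[of _ y]) auto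
  have h: "\<And>a b. A' a b + (if a = x \<and> b = y' then 1 else 0) = A a b + (if a = x \<and> b = y then 1 else 0)"
    using y' ne unfolding A'_def by auto
  have rs: "row_sum A' a = row_sum A a" for a
  proof -
    have "(\<Sum>b\<in>UNIV. A' a b + (if a = x \<and> b = y' then 1 else 0)) = (\<Sum>b\<in>UNIV. A a b + (if a = x \<and> b = y then 1 else 0))"
      using h by simp
    hence "row_sum A' a + (\<Sum>b\<in>UNIV. (if a = x \<and> b = y' then 1 else 0)) = row_sum A a + (\<Sum>b\<in>UNIV. (if a = x \<and> b = y then 1 else 0))"
      unfolding row_sum_def by (simp add: sum.distrib)
    thus ?thesis by (cases "a = x") auto
  qed
  have cls: "col_sum A' b + (if b = y' then 1 else 0) = col_sum A b + (if b = y then 1 else 0)" for b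
  proof -
    have "(\<Sum>a\<in>UNIV. A' a b + (if a = x \<and> b = y' then 1 else 0)) = (\<Sum>a\<in>UNIV. A a b + (if a = x \<and> b = y then 1 else 0))"
      using h by simp
    hence "col_sum A' b + (\<Sum>a\<in>UNIV. (if a = x \<and> b = y' then 1 else 0)) = col_sum A b + (\<Sum>a\<in>UNIV. (if a = x \<and> b = y then 1 else 0))"
      unfolding col_sum_def by (simp add: sum.distrib)
    thus ?thesis by (cases "b = y"; cases "b = y'") auto
  qed
  have cb: "col_sum A' b \<le> \<beta> b" for b
  proof -
    have "col_sum A b \<le> \<beta> b" using aA by (simp add: alloc_state_def)
    thus ?thesis using cls[of b] cs by (cases "b = y") auto
  qed
  have aA': "alloc_state E \<alpha> \<beta> A'"
    using aA Exy rs cb unfolding alloc_state_def A'_def by auto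
  have adj: "L_adj E \<alpha> \<beta> A A'" using aA aA' mv unfolding L_adj_def by auto
  have pw: "\<bar>int (A' a b) - int (B a b)\<bar> \<le> \<bar>int (A a b) - int (B a b)\<bar>" for a b
    using y' lt unfolding A'_def by auto
  have st: "\<bar>int (A' x y) - int (B x y)\<bar> < \<bar>int (A x y) - int (B x y)\<bar>"
    using y' lt ne unfolding A'_def by auto
  have "dist_alloc A' B < dist_alloc A B"
    unfolding dist_alloc_def
  proof (rule sum_strict_mono_ex1)
    show "\<forall>a\<in>UNIV. (\<Sum>b\<in>UNIV. \<bar>int (A' a b) - int (B a b)\<bar>) \<le> (\<Sum>b\<in>UNIV. \<bar>int (A a b) - int (B a b)\<bar>)"
      using pw by (auto intro: sum_mono)
    show "\<exists>a\<in>UNIV. (\<Sum>b\<in>UNIV. \<bar>int (A' a b) - int (B a b)\<bar>) < (\<Sum>b\<in>UNIV. \<bar>int (A a b) - int (B a b)\<bar>)"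
    proof (rule bexI[of _ x])
      show "(\<Sum>b\<in>UNIV. \<bar>int (A' x b) - int (B x b)\<bar>) < (\<Sum>b\<in>UNIV. \<bar>int (A x b) - int (B x b)\<bar>)"
        by (rule sum_strict_mono_ex1) (use pw st in auto)
    qed simp
  qed simp
  thus ?thesis using adj by blast
qed

theorem lemma3:
  fixes E :: "('a::finite \<times> 'a) set" and \<alpha> \<beta> :: "'a \<Rightarrow> nat"
    and W1 W2 :: "'a \<Rightarrow> 'a \<Rightarrow> nat" and y :: 'a
  assumes "minimal_pair E \<alpha> \<beta> W1 W2"
    and "col_sum W1 y < \<beta> y"
  shows "\<forall>x. W1 x y = W2 x y"
proof (rule ccontr)
  assume nn: "\<not> (\<forall>x. W1 x y = W2 x y)"
  have a1: "alloc_state E \<alpha> \<beta> W1" and a2: "alloc_state E \<alpha> \<beta> W2"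
    and mn: "\<And>W1' W2'. L_conn E \<alpha> \<beta> W1 W1' \<Longrightarrow> L_conn E \<alpha> \<beta> W2 W2' \<Longrightarrow>
        dist_alloc W1 W2 \<le> dist_alloc W1' W2'"
    using assms(1) unfolding minimal_pair_def by auto
  show False
  proof (cases "\<exists>x. W1 x y < W2 x y")
    case True
    then obtain x where "W1 x y < W2 x y" by blast
    from key[OF a1 a2 assms(2) this] obtain A' where
      "L_adj E \<alpha> \<beta> W1 A'" "dist_alloc A' W2 < dist_alloc W1 W2" by blast
    moreover have "L_conn E \<alpha> \<beta> W1 A'" using calculation(1) unfolding L_conn_def by auto
    moreover have "L_conn E \<alpha> \<beta> W2 W2" unfolding L_conn_def by auto
    ultimately show False using mn by fastforce
  next
    case False
    then have le: "\<forall>x. W2 x y \<le> W1 x y" by (auto simp: not_less)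
    from nn obtain x where "W1 x y \<noteq> W2 x y" by blast
    with le have lx: "W2 x y < W1 x y" using le_neq_implies_less by (metis le)
    have "col_sum W2 y < col_sum W1 y" unfolding col_sum_def using le lx
      by (intro sum_strict_mono_ex1) auto
    with assms(2) have "col_sum W2 y < \<beta> y" by simp
    from key[OF a2 a1 this lx] obtain A' where
      "L_adj E \<alpha> \<beta> W2 A'" "dist_alloc A' W1 < dist_alloc W2 W1" by blast
    moreover have "L_conn E \<alpha> \<beta> W2 A'" using calculation(1) unfolding L_conn_def by auto
    moreover have "L_conn E \<alpha> \<beta> W1 W1" unfolding L_conn_def by auto
    ultimately show False using mn[of W1 A'] dist_sym[of W1 A'] dist_sym[of W1 W2] by simp
  qed
qed

end
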